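(* Let $G=(V,E)$ be a control flow graph and $p\in V$ a predicate node. For each maximal path from $p$ in $G$ there exists a maximal path from $p$ in $A_p$ with the same order of the first occurrences of all nodes from $V_p$, and vice versa (for each maximal path from $p$ in $A_p$ there exists a maximal path from $p$ in $G$ with the same order of the first occurrences of all nodes from $V_p$).
   Context: A control flow graph (CFG) is a finite directed graph $G=(V,E)$ in which every node has at most two outgoing edges; nodes with exactly two outgoing edges are predicate nodes. A path from $n_1$ is a nonempty finite or infinite sequence $n_1n_2\ldots$ of nodes with each adjacent pair an edge; it is maximal if it is infinite or its last node has no successor. For a node $p$, $V_p$ is the set of nodes occurring on all maximal paths from $p$ in $G$ (so $p\in V_p$). For $V'\subseteq V$, a $V'$-interval from $x$ to $y$ is a finite path $n_1\ldots n_k$ in $G$ with $k\ge 2$, $n_1=x\in V'$, $n_k=y\in V'$, and $n_i\notin V'$ for all $1<i<k$. $A_p$ is the directed graph with node set $V_p$ and an edge $(x,y)$ iff there is a $V_p$-interval from $x$ to $y$ in $G$. Paths and maximal paths in $A_p$ are defined as in $G$. *)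

theory Defs
  imports Main
begin

datatype 'a path = FinP "'a list" | InfP "nat \<Rightarrow> 'a"

definition cfg :: "'a set \<Rightarrow> ('a \<times> 'a) set \<Rightarrow> bool" where
  "cfg V E \<longleftrightarrow> finite V \<and> E \<subseteq> V \<times> V \<and> (\<forall>n\<in>V. card {m. (n, m) \<in> E} \<le> 2)"

definition predicate_node :: "('a \<times> 'a) set \<Rightarrow> 'a \<Rightarrow> bool" where
  "predicate_node E n \<longleftrightarrow> card {m. (n, m) \<in> E} = 2"

fun is_path :: "('a \<times> 'a) set \<Rightarrow> 'a path \<Rightarrow> bool" where
  "is_path E (FinP xs) \<longleftrightarrow> xs \<noteq> [] \<and> (\<forall>i. Suc i < length xs \<longrightarrow> (xs ! i, xs ! Suc i) \<in> E)"
| "is_path E (InfP f) \<longleftrightarrow> (\<forall>i. (f i, f (Suc i)) \<in> E)"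

fun start :: "'a path \<Rightarrow> 'a" where
  "start (FinP xs) = hd xs"
| "start (InfP f) = f 0"

fun valid_pos :: "'a path \<Rightarrow> nat \<Rightarrow> bool" where
  "valid_pos (FinP xs) i \<longleftrightarrow> i < length xs"
| "valid_pos (InfP f) i \<longleftrightarrow> True"

fun node_at :: "'a path \<Rightarrow> nat \<Rightarrow> 'a" where
  "node_at (FinP xs) i = xs ! i"
| "node_at (InfP f) i = f i"

definition path_nodes :: "'a path \<Rightarrow> 'a set" where
  "path_nodes \<pi> = {node_at \<pi> i | i. valid_pos \<pi> i}"

fun maximal_path :: "('a \<times> 'a) set \<Rightarrow> 'a path \<Rightarrow> bool" where
  "maximal_path E (FinP xs) \<longleftrightarrow> is_path E (FinP xs) \<and> (\<forall>y. (last xs, y) \<notin> E)"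
| "maximal_path E (InfP f) \<longleftrightarrow> is_path E (InfP f)"

definition Vp :: "'a set \<Rightarrow> ('a \<times> 'a) set \<Rightarrow> 'a \<Rightarrow> 'a set" where
  "Vp V E p = {v \<in> V. \<forall>\<pi>. maximal_path E \<pi> \<and> start \<pi> = p \<longrightarrow> v \<in> path_nodes \<pi>}"

definition is_interval :: "('a \<times> 'a) set \<Rightarrow> 'a set \<Rightarrow> 'a \<Rightarrow> 'a \<Rightarrow> 'a list \<Rightarrow> bool" where
  "is_interval E V' x y xs \<longleftrightarrow> is_path E (FinP xs) \<and> length xs \<ge> 2 \<and>
     hd xs = x \<and> x \<in> V' \<and> last xs = y \<and> y \<in> V' \<and>
     (\<forall>i. 0 < i \<and> i < length xs - 1 \<longrightarrow> xs ! i \<notin> V')"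

text \<open>Edges of A_p (its node set is Vp V E p).\<close>
definition Ap_edges :: "'a set \<Rightarrow> ('a \<times> 'a) set \<Rightarrow> 'a \<Rightarrow> ('a \<times> 'a) set" where
  "Ap_edges V E p = {(x, y). \<exists>xs. is_interval E (Vp V E p) x y xs}"

definition first_occ :: "'a path \<Rightarrow> 'a \<Rightarrow> nat" where
  "first_occ \<pi> x = (LEAST i. valid_pos \<pi> i \<and> node_at \<pi> i = x)"

text \<open>Equality of these relations means the same nodes
  of S occur and their first occurrences appear in the same order.\<close>
definition first_occ_order :: "'a set \<Rightarrow> 'a path \<Rightarrow> ('a \<times> 'a) set" where
  "first_occ_order S \<pi> = {(x, y). x \<in> S \<and> y \<in> S \<and> x \<in> path_nodes \<pi> \<and> y \<in> path_nodes \<pi>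
       \<and> first_occ \<pi> x \<le> first_occ \<pi> y}"

end

theory Submission
  imports Defs
begin

lemma isp_list: "is_path E (FinP xs) \<longleftrightarrow> xs \<noteq> [] \<and> successively (\<lambda>a b. (a,b)\<in>E) xs"
  by (auto simp: successively_conv_nth)

lemma path_nodes_FinP[simp]: "path_nodes (FinP xs) = set xs"
  by (auto simp: path_nodes_def in_set_conv_nth)

lemma path_valid0: "is_path E \<pi> \<Longrightarrow> valid_pos \<pi> 0"
  by (cases \<pi>) auto

lemma valid_mono: "valid_pos \<pi> j \<Longrightarrow> i \<le> j \<Longrightarrow> valid_pos \<pi> i"
  by (cases \<pi>) auto

lemma path_step: "is_path E \<pi> \<Longrightarrow> valid_pos \<pi> (Suc i) \<Longrightarrow> (node_at \<pi> i, node_at \<pi> (Suc i)) \<in> E"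
  by (cases \<pi>) auto

lemma start_node: "valid_pos \<pi> 0 \<Longrightarrow> start \<pi> = node_at \<pi> 0"
  by (cases \<pi>) (auto simp: hd_conv_nth)

lemma is_path_iff: "is_path E \<pi> \<longleftrightarrow> valid_pos \<pi> 0 \<and> (\<forall>i. valid_pos \<pi> (Suc i) \<longrightarrow> (node_at \<pi> i, node_at \<pi> (Suc i)) \<in> E)"
  by (cases \<pi>) auto

definition pref :: "'a list \<Rightarrow> 'a path \<Rightarrow> bool" where
  "pref xs \<pi> \<longleftrightarrow> (\<forall>i<length xs. valid_pos \<pi> i \<and> node_at \<pi> i = xs ! i)"

lemma first_occ_pref:
  assumes "pref xs \<pi>" "x \<in> set xs"
  shows "first_occ \<pi> x = first_occ (FinP xs) x"
proof -
  let ?Q = "\<lambda>i. valid_pos (FinP xs) i \<and> node_at (FinP xs) i = x"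
  let ?P = "\<lambda>i. valid_pos \<pi> i \<and> node_at \<pi> i = x"
  obtain k where k: "k < length xs" "xs ! k = x" using assms(2) by (auto simp: in_set_conv_nth)
  have Qk: "?Q k" using k by auto
  define m where "m = Least ?Q"
  have Qm: "?Q m" unfolding m_def by (rule LeastI[of _ k]) (use Qk in auto)
  have "Least ?P = m"
  proof (rule Least_equality)
    show "?P m" using Qm assms(1) by (auto simp: pref_def)
    fix y assume Py: "?P y"
    show "m \<le> y"
    proof (cases "y < length xs")
      case True
      then have "?Q y" using Py assms(1) by (auto simp: pref_def)
      then show ?thesis unfolding m_def by (rule Least_le)
    next
      case False then show ?thesis using Qm by auto
    qed
  qed
  then show ?thesis by (simp add: first_occ_def m_def)
qed

lemma pref_nodes: "pref xs \<pi> \<Longrightarrow> set xs \<subseteq> path_nodes \<pi>"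
  by (auto simp: pref_def path_nodes_def in_set_conv_nth) metis

lemma foo_pref:
  assumes "pref xs \<pi>" "S \<inter> path_nodes \<pi> \<subseteq> set xs"
  shows "first_occ_order S \<pi> = first_occ_order S (FinP xs)"
proof -
  have e: "x \<in> S \<and> x \<in> path_nodes \<pi> \<longleftrightarrow> x \<in> S \<and> x \<in> set xs" for x
    using assms pref_nodes[OF assms(1)] by auto
  have f: "x \<in> S \<Longrightarrow> x \<in> path_nodes \<pi> \<Longrightarrow> first_occ \<pi> x = first_occ (FinP xs) x" for x
    using e first_occ_pref[OF assms(1)] by blast
  show ?thesis unfolding first_occ_order_def path_nodes_FinP
    using e f by (auto; metis)
qed

lemma first_occ_Cons:
  assumes "x \<in> set (a # xs)"
  shows "first_occ (FinP (a # xs)) x = (if a = x then 0 else Suc (first_occ (FinP xs) x))"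
proof (cases "a = x")
  case True then show ?thesis by (auto simp: first_occ_def intro!: Least_equality)
next
  case False
  then obtain k where "k < length xs" "xs ! k = x" using assms by (auto simp: in_set_conv_nth)
  then have "(LEAST i. i < length (a # xs) \<and> (a # xs) ! i = x) = Suc (LEAST i. i < length xs \<and> xs ! i = x)"
    using False by (subst Least_Suc[of _ "Suc k"]) auto
  then show ?thesis using False by (simp add: first_occ_def)
qed

lemma first_occ_le_iff:
  "x \<in> set xs \<Longrightarrow> y \<in> set xs \<Longrightarrow>
   first_occ (FinP xs) x \<le> first_occ (FinP xs) y \<longleftrightarrow> x = y \<or> x \<in> set (takeWhile (\<lambda>z. z \<noteq> y) xs)"
proof (induction xs)
  case Nil then show ?case by simp
next
  case (Cons a xs)
  show ?case
  proof (cases "a = y")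
    case True
    then show ?thesis using Cons.prems by (auto simp: first_occ_Cons)
  next
    case False
    then have y: "y \<in> set xs" using Cons.prems by auto
    show ?thesis
    proof (cases "a = x")
      case True then show ?thesis using False Cons.prems by (auto simp: first_occ_Cons)
    next
      case False2: False
      then have "x \<in> set xs" using Cons.prems by auto
      then show ?thesis using Cons.IH y False False2 Cons.prems by (auto simp: first_occ_Cons)
    qed
  qed
qed

lemma foo_list: "first_occ_order S (FinP xs) =
  {(x,y). x \<in> S \<and> y \<in> S \<and> y \<in> set xs \<and> (x = y \<or> x \<in> set (takeWhile (\<lambda>z. z \<noteq> y) xs))}"
  unfolding first_occ_order_def path_nodes_FinP
  using first_occ_le_iff set_takeWhileD by fastforce

lemma takeWhile_filter: "P y \<Longrightarrow> takeWhile (\<lambda>z. z \<noteq> y) (filter P xs) = filter P (takeWhile (\<lambda>z. z \<noteq> y) xs)"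
  by (induction xs) auto

lemma foo_filter: "first_occ_order S (FinP (filter (\<lambda>x. x \<in> S) xs)) = first_occ_order S (FinP xs)"
  unfolding foo_list by (auto simp: takeWhile_filter)


declare is_path.simps(1)[simp del]

lemma isp_Nil[simp]: "\<not> is_path E (FinP [])" by (simp add: is_path.simps)
lemma isp_single[simp]: "is_path E (FinP [a])" by (simp add: is_path.simps)

definition AE :: "('a \<times> 'a) set \<Rightarrow> 'a set \<Rightarrow> ('a \<times> 'a) set" where
  "AE E S = {(x, y). \<exists>xs. is_interval E S x y xs}"

lemma interval_iff:
  "is_interval E S x y I \<longleftrightarrow> (\<exists>m. I = x # m @ [y] \<and> x \<in> S \<and> y \<in> S \<and> (\<forall>z\<in>set m. z \<notin> S)
     \<and> successively (\<lambda>a b. (a,b)\<in>E) (x # m @ [y]))"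
proof
  assume H: "is_interval E S x y I"
  then have L: "length I \<ge> 2" "hd I = x" "last I = y" "x \<in> S" "y \<in> S"
    and inner: "\<And>i. 0 < i \<Longrightarrow> i < length I - 1 \<Longrightarrow> I ! i \<notin> S"
    and P: "is_path E (FinP I)"
    by (auto simp: is_interval_def)
  define m where "m = butlast (tl I)"
  have I: "I = x # m @ [y]"
  proof -
    have "I = hd I # tl I" using L by (cases I) auto
    moreover have "tl I \<noteq> []" using L by (cases I) auto
    then have "tl I = butlast (tl I) @ [last (tl I)]" by simp
    moreover have "last (tl I) = last I" using L by (cases I) auto
    ultimately show ?thesis using L by (simp add: m_def)
  qed
  have "\<forall>z\<in>set m. z \<notin> S"
  proof
    fix z assume "z \<in> set m"
    then obtain k where k: "k < length m" "m ! k = z" by (auto simp: in_set_conv_nth)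
    have "I ! Suc k = z" using k by (subst I) (simp add: nth_append)
    moreover have "Suc k < length I - 1" using k I by (metis One_nat_def add_Suc_right diff_Suc_1 length_Cons length_append list.size(3,4) not_less_eq)
    ultimately show "z \<notin> S" using inner[of "Suc k"] by auto
  qed
  then show "\<exists>m. I = x # m @ [y] \<and> x \<in> S \<and> y \<in> S \<and> (\<forall>z\<in>set m. z \<notin> S)
     \<and> successively (\<lambda>a b. (a,b)\<in>E) (x # m @ [y])"
    using I L P by (auto simp: isp_list)
next
  assume "\<exists>m. I = x # m @ [y] \<and> x \<in> S \<and> y \<in> S \<and> (\<forall>z\<in>set m. z \<notin> S)
     \<and> successively (\<lambda>a b. (a,b)\<in>E) (x # m @ [y])"
  then obtain m where I: "I = x # m @ [y]" "x \<in> S" "y \<in> S" "\<forall>z\<in>set m. z \<notin> S"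
     "successively (\<lambda>a b. (a,b)\<in>E) (x # m @ [y])" by blast
  have "I ! i \<notin> S" if i0: "0 < i" "i < length I - 1" for i
  proof -
    obtain k where "i = Suc k" using i0 by (cases i) auto
    then have "I ! i = m ! k" "k < length m" using i0 I by (auto simp: nth_append)
    then show ?thesis using I(4) by auto
  qed
  then show "is_interval E S x y I" using I unfolding is_interval_def isp_list by auto
qed

lemma filter_path:
  assumes "is_path E (FinP xs)" "hd xs \<in> S"
  shows "is_path (AE E S) (FinP (filter (\<lambda>x. x \<in> S) xs)) \<and> hd (filter (\<lambda>x. x \<in> S) xs) = hd xs"
  using assms
proof (induction "length xs" arbitrary: xs rule: less_induct)
  case less
  obtain a xs' where xs: "xs = a # xs'" using less.prems by (cases xs) (auto)
  have aS: "a \<in> S" using less.prems xs by auto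
  show ?case
  proof (cases "\<exists>y\<in>set xs'. y \<in> S")
    case False
    then have "filter (\<lambda>x. x \<in> S) xs = [a]" using xs aS by (simp add: filter_empty_conv)
    then show ?thesis using xs by simp
  next
    case True
    then obtain u b w where s: "xs' = u @ b # w" "b \<in> S" "\<forall>y\<in>set u. y \<notin> S"
      using split_list_first_prop[OF True] by blast
    let ?P = "\<lambda>a b. (a,b)\<in>E"
    have sx: "successively ?P xs" using less.prems(1) by (simp add: isp_list)
    have "successively ?P ((a # u @ [b]) @ w)" using sx xs s by simp
    then have s1: "successively ?P (a # u @ [b])" by (simp only: successively_append_iff)
    have "successively ?P ((a # u) @ (b # w))" using sx xs s by simp
    then have s2: "successively ?P (b # w)" by (simp only: successively_append_iff)
    have "is_interval E S a b (a # u @ [b])" using s aS s1 by (subst interval_iff) auto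
    then have edge: "(a, b) \<in> AE E S" by (auto simp: AE_def)
    have len: "length (b # w) < length xs" using xs s by simp
    have pbw: "is_path E (FinP (b # w))" using s2 by (simp add: isp_list)
    have IH: "is_path (AE E S) (FinP (filter (\<lambda>x. x \<in> S) (b # w))) \<and> hd (filter (\<lambda>x. x \<in> S) (b # w)) = b"
      using less.hyps[OF len pbw] s(2) by simp
    have fe: "filter (\<lambda>x. x \<in> S) xs = a # filter (\<lambda>x. x \<in> S) (b # w)"
      using xs s aS by (simp add: filter_empty_conv)
    show ?thesis unfolding fe using IH edge xs s
      by (simp add: isp_list successively_Cons)
  qed
qed

lemma expand_path:
  assumes "is_path (AE E S) (FinP ys)" "last ys \<in> S"
  shows "\<exists>xs. is_path E (FinP xs) \<and> hd xs = hd ys \<and> last xs = last ys \<and> filter (\<lambda>x. x \<in> S) xs = ys"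
  using assms
proof (induction ys)
  case Nil then show ?case by simp
next
  case (Cons a ys)
  show ?case
  proof (cases "ys = []")
    case True then show ?thesis using Cons.prems by (intro exI[of _ "[a]"]) auto
  next
    case False
    then have edge: "(a, hd ys) \<in> AE E S" and pys: "is_path (AE E S) (FinP ys)"
      using Cons.prems by (auto simp: isp_list successively_Cons)
    obtain xs' where xs': "is_path E (FinP xs')" "hd xs' = hd ys" "last xs' = last ys" "filter (\<lambda>x. x \<in> S) xs' = ys"
      using Cons.IH[OF pys] Cons.prems False by auto
    obtain m where m: "a \<in> S" "\<forall>z\<in>set m. z \<notin> S" "successively (\<lambda>a b. (a,b)\<in>E) (a # m @ [hd ys])"
      using edge by (auto simp: AE_def interval_iff)
    have ne: "xs' \<noteq> []" using xs' by auto
    have xs'e: "xs' = hd ys # tl xs'" using ne xs'(2) by (cases xs') auto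
    have "successively (\<lambda>a b. (a,b)\<in>E) ((a # m) @ [hd ys])" using m(3) by simp
    then have s1: "successively (\<lambda>a b. (a,b)\<in>E) (a # m)" and e1: "(last (a # m), hd ys) \<in> E"
      by (simp_all only: successively_append_iff) auto
    have "successively (\<lambda>a b. (a,b)\<in>E) ((a # m) @ xs')"
      using s1 e1 xs'(1) ne xs'(2) unfolding isp_list
      by (simp only: successively_append_iff) simp
    then show ?thesis using xs' m ne False
      by (intro exI[of _ "a # m @ xs'"]) (auto simp: isp_list filter_empty_conv)
  qed
qed

lemma extend_path:
  assumes "is_path E (FinP xs)"
  shows "\<exists>\<pi>. maximal_path E \<pi> \<and> pref xs \<pi>"
proof -
  define n0 where "n0 = length xs - 1"
  have ne: "xs \<noteq> []" using assms by auto
  define h where "h = rec_nat (last xs) (\<lambda>_ z. SOME y. (z,y)\<in>E)"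
  have h0: "h 0 = last xs" and hS: "\<And>n. h (Suc n) = (SOME y. (h n,y)\<in>E)" by (simp_all add: h_def)
  define g where "g i = (if i < length xs then xs ! i else h (i - n0))" for i
  have g1: "i < length xs \<Longrightarrow> g i = xs ! i" for i by (simp add: g_def)
  have g2: "g i = h (i - n0)" if "n0 \<le> i" for i
  proof (cases "i < length xs")
    case True
    then have "i = n0" using that by (simp add: n0_def)
    then show ?thesis using True ne h0 by (simp add: g_def n0_def last_conv_nth)
  next
    case False then show ?thesis by (simp add: g_def)
  qed
  have edge: "(g i, g (Suc i)) \<in> E" if "i < n0 \<or> (\<exists>y. (h (i - n0), y) \<in> E)" for i
  proof (cases "i < n0")
    case True
    then have "Suc i < length xs" by (simp add: n0_def)
    then show ?thesis using assms g1[of i] g1[of "Suc i"] by (simp add: is_path.simps)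
  next
    case False
    then have "(h (i - n0), h (Suc (i - n0))) \<in> E" using that hS by (auto intro: someI_ex)
    moreover have "Suc (i - n0) = Suc i - n0" using False by auto
    ultimately show ?thesis using g2 False by auto
  qed
  have pr: "pref xs \<pi>" if "\<And>i. i < length xs \<Longrightarrow> valid_pos \<pi> i \<and> node_at \<pi> i = g i" for \<pi>
    using that g1 by (auto simp: pref_def)
  show ?thesis
  proof (cases "\<forall>n. \<exists>y. (h n, y) \<in> E")
    case True
    then have "maximal_path E (InfP g)" using edge by auto
    moreover have "pref xs (InfP g)" by (rule pr) simp
    ultimately show ?thesis by blast
  next
    case False
    define k where "k = (LEAST n. \<not> (\<exists>y. (h n, y) \<in> E))"
    have k: "\<not> (\<exists>y. (h k, y) \<in> E)" using False LeastI_ex[of "\<lambda>n. \<not> (\<exists>y. (h n, y) \<in> E)"] unfolding k_def by blast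
    have kk: "\<exists>y. (h n, y) \<in> E" if "n < k" for n using not_less_Least that k_def by blast
    define L where "L = map g [0..<length xs + k]"
    have "is_path E (FinP L)"
      unfolding L_def is_path.simps
    proof (intro conjI allI impI)
      show "map g [0..<length xs + k] \<noteq> []" using ne by simp
      fix i assume i: "Suc i < length (map g [0..<length xs + k])"
      then have "Suc i < length xs + k" by simp
      moreover have "length xs > 0" using ne by simp
      ultimately have "i < n0 \<or> i - n0 < k" unfolding n0_def by linarith
      then have "(g i, g (Suc i)) \<in> E" using kk edge by blast
      then show "(map g [0..<length xs + k] ! i, map g [0..<length xs + k] ! Suc i) \<in> E"
        using i by (simp del: upt_Suc)
    qed
    moreover have "last L = h k"
    proof -
      have "last L = g (length xs + k - 1)" unfolding L_def using ne by (simp add: last_map del: upt_Suc)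
      also have "\<dots> = h k" using g2[of "length xs + k - 1"] ne by (simp add: n0_def)
      finally show ?thesis .
    qed
    ultimately have "maximal_path E (FinP L)" using k by auto
    moreover have "pref xs (FinP L)" by (rule pr) (simp add: L_def del: upt_Suc)
    ultimately show ?thesis by blast
  qed
qed

lemma segment_path:
  assumes "is_path E \<pi>" "valid_pos \<pi> b" "a \<le> b"
  shows "is_path E (FinP (map (node_at \<pi>) [a..<Suc b]))"
proof -
  have "(node_at \<pi> (a + i), node_at \<pi> (Suc (a + i))) \<in> E" if "Suc (a + i) \<le> b" for i
    using assms that by (metis path_step valid_mono)
  then show ?thesis using assms by (auto simp: is_path.simps simp del: upt_Suc)
qed


lemma lasso:
  assumes c: "c \<noteq> []" and pac: "is_path E (FinP (a @ c))" and pc: "is_path E (FinP (c @ [hd c]))"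
  defines "g \<equiv> \<lambda>n. if n < length a then a ! n else c ! ((n - length a) mod length c)"
  shows "is_path E (InfP g) \<and> pref (a @ c) (InfP g) \<and> path_nodes (InfP g) \<subseteq> set (a @ c)"
proof (intro conjI)
  have lc: "length c > 0" using c by simp
  have gac: "g i = (a @ c) ! i" if "i < length (a @ c)" for i
    using that by (auto simp: g_def nth_append)
  show "pref (a @ c) (InfP g)" using gac by (simp add: pref_def)
  show "path_nodes (InfP g) \<subseteq> set (a @ c)"
    using lc by (auto simp: path_nodes_def g_def)
  show "is_path E (InfP g)" unfolding is_path.simps
  proof
    fix n
    consider "Suc n < length a" | "Suc n = length a" | "n \<ge> length a" by linarith
    then show "(g n, g (Suc n)) \<in> E"
    proof cases
      case 1
      then have "Suc n < length (a @ c)" by simp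
      then show ?thesis using pac gac[of n] gac[of "Suc n"] by (simp add: is_path.simps)
    next
      case 2
      then have "Suc n < length (a @ c)" using lc by simp
      then show ?thesis using pac gac[of n] gac[of "Suc n"] by (simp add: is_path.simps)
    next
      case 3
      define r where "r = (n - length a) mod length c"
      have r: "r < length c" using lc by (simp add: r_def)
      have gn: "g n = (c @ [hd c]) ! r" using 3 r by (simp add: g_def r_def nth_append)
      have "Suc n - length a = Suc (n - length a)" using 3 by simp
      then have "(Suc n - length a) mod length c = Suc r mod length c"
        by (simp add: r_def mod_Suc_eq)
      then have gs: "g (Suc n) = c ! (Suc r mod length c)" using 3 by (simp add: g_def)
      have "(c @ [hd c]) ! Suc r = c ! (Suc r mod length c)"
      proof (cases "Suc r < length c")
        case True then show ?thesis by (simp add: nth_append)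
      next
        case False
        then have "Suc r = length c" using r by simp
        then show ?thesis using c by (simp add: hd_conv_nth)
      qed
      then have "g (Suc n) = (c @ [hd c]) ! Suc r" using gs by simp
      moreover have "Suc r < length (c @ [hd c])" using r by simp
      ultimately show ?thesis using pc gn by (simp add: is_path.simps)
    qed
  qed
qed

lemma cover:
  assumes "finite T" "T \<subseteq> path_nodes \<pi>" "valid_pos \<pi> 0"
  shows "\<exists>N>0. valid_pos \<pi> (N - 1) \<and> T \<subseteq> node_at \<pi> ` {..<N}"
  using assms
proof (induction T rule: finite_induct)
  case empty then show ?case by (intro exI[of _ 1]) auto
next
  case (insert x F)
  then obtain N where N: "N > 0" "valid_pos \<pi> (N - 1)" "F \<subseteq> node_at \<pi> ` {..<N}" by auto
  obtain k where k: "valid_pos \<pi> k" "node_at \<pi> k = x" using insert.prems by (auto simp: path_nodes_def)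
  define M where "M = max N (Suc k)"
  have "valid_pos \<pi> (M - 1)" using N k by (cases "N \<le> Suc k") (auto simp: M_def max_def)
  moreover have "insert x F \<subseteq> node_at \<pi> ` {..<M}" using N k by (force simp: M_def)
  ultimately show ?case using N by (intro exI[of _ M]) (auto simp: M_def)
qed

lemma AE_target: "(x, y) \<in> AE E S \<Longrightarrow> y \<in> S"
  by (auto simp: AE_def interval_iff)

lemma nodes_in:
  assumes "is_path (AE E S) \<pi>" "start \<pi> \<in> S" "valid_pos \<pi> i"
  shows "node_at \<pi> i \<in> S"
  using assms(3)
proof (induction i)
  case 0
  have "start \<pi> = node_at \<pi> 0" by (rule start_node[OF "0.prems"])
  then show ?case using assms(2) by simp
next
  case (Suc i)
  have e: "(node_at \<pi> i, node_at \<pi> (Suc i)) \<in> AE E S" by (rule path_step[OF assms(1) Suc.prems])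
  show ?case by (rule AE_target[OF e])
qed

lemma filter_butlast: "xs \<noteq> [] \<Longrightarrow> P (last xs) \<Longrightarrow> filter P (butlast xs) = butlast (filter P xs)"
  by (metis append_butlast_last_id butlast_snoc filter.simps filter_append append_Nil2)

lemma glue:
  assumes "successively P xs" "successively P ys" "xs \<noteq> []" "ys \<noteq> []" "last xs = hd ys"
  shows "successively P (butlast xs @ ys) \<and> hd (butlast xs @ ys) = hd xs"
proof (cases "butlast xs = []")
  case True
  then have "xs = [last xs]" using assms(3) by (metis append_butlast_last_id append_Nil)
  then show ?thesis using assms True by (metis append_Nil list.sel(1))
next
  case False
  have xe: "xs = butlast xs @ [last xs]" using assms(3) by simp
  then have "successively P (butlast xs @ [last xs])" using assms(1) by simp
  then have "successively P (butlast xs)" "P (last (butlast xs)) (last xs)"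
    using False by (simp_all only: successively_append_iff) auto
  then have "successively P (butlast xs @ ys)" using assms False
    by (simp only: successively_append_iff) simp
  moreover have "hd (butlast xs @ ys) = hd xs" using False xe by (metis hd_append2)
  ultimately show ?thesis by simp
qed

lemma p_in_Vp: "p \<in> V \<Longrightarrow> p \<in> Vp V E p"
  unfolding Vp_def path_nodes_def
proof (clarsimp)
  fix \<pi> assume "maximal_path E \<pi>" "p = start \<pi>"
  moreover have "is_path E \<pi>" using \<open>maximal_path E \<pi>\<close> by (cases \<pi>) auto
  ultimately show "\<exists>i. start \<pi> = node_at \<pi> i \<and> valid_pos \<pi> i"
    using path_valid0 start_node by metis
qed

lemma max_is_path: "maximal_path E \<pi> \<Longrightarrow> is_path E \<pi>"
  by (cases \<pi>) auto

lemma node_at_InfP: "node_at (InfP f) = f" by (rule ext) simp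


lemma Ap_AE: "Ap_edges V E p = AE E (Vp V E p)"
  by (simp add: Ap_edges_def AE_def)

lemma dir1:
  assumes fin: "finite S" and SV: "S = Vp V E p" and pV: "p \<in> V"
    and mp: "maximal_path E \<pi>" and st: "start \<pi> = p"
  shows "\<exists>\<pi>'. maximal_path (AE E S) \<pi>' \<and> start \<pi>' = p \<and> first_occ_order S \<pi>' = first_occ_order S \<pi>"
proof -
  have pp: "is_path E \<pi>" by (rule max_is_path[OF mp])
  have v0: "valid_pos \<pi> 0" by (rule path_valid0[OF pp])
  have Sn: "S \<subseteq> path_nodes \<pi>" using mp st unfolding SV Vp_def by blast
  obtain N where N: "N > 0" "valid_pos \<pi> (N - 1)" "S \<subseteq> node_at \<pi> ` {..<N}"
    using cover[OF fin Sn v0] by blast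
  define xs where "xs = map (node_at \<pi>) [0..<Suc (N - 1)]"
  have xsN: "xs = map (node_at \<pi>) [0..<N]" using N by (simp add: xs_def del: upt_Suc)
  have pxs: "is_path E (FinP xs)" unfolding xs_def by (rule segment_path[OF pp N(2)]) simp
  have prx: "pref xs \<pi>" unfolding pref_def xsN using N(2) valid_mono[of \<pi> "N - 1"] by auto
  have hx: "hd xs = p"
  proof -
    have "hd xs = node_at \<pi> 0" unfolding xsN using N(1) by (simp add: hd_map)
    also have "\<dots> = start \<pi>" using start_node[OF v0] by simp
    finally show ?thesis using st by simp
  qed
  have pS: "p \<in> S" using p_in_Vp[OF pV] SV by simp
  have Sx: "S \<subseteq> set xs" using N(3) unfolding xsN by auto
  define ys where "ys = filter (\<lambda>x. x \<in> S) xs"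
  have fy: "is_path (AE E S) (FinP ys) \<and> hd ys = hd xs"
    unfolding ys_def by (rule filter_path[OF pxs]) (simp add: hx pS)
  have Sy: "S \<subseteq> set ys" using Sx by (auto simp: ys_def)
  obtain \<pi>' where \<pi>': "maximal_path (AE E S) \<pi>'" "pref ys \<pi>'"
    using extend_path[of "AE E S" ys] fy by blast
  have yne: "ys \<noteq> []" using fy by auto
  have "valid_pos \<pi>' 0 \<and> node_at \<pi>' 0 = ys ! 0" using \<pi>'(2) yne by (simp add: pref_def)
  then have "start \<pi>' = p" using start_node[of \<pi>'] fy hx yne by (simp add: hd_conv_nth)
  moreover have "first_occ_order S \<pi>' = first_occ_order S (FinP ys)"
    by (rule foo_pref[OF \<pi>'(2)]) (use Sy in blast)
  moreover have "first_occ_order S (FinP ys) = first_occ_order S (FinP xs)"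
    unfolding ys_def by (rule foo_filter)
  moreover have "first_occ_order S \<pi> = first_occ_order S (FinP xs)"
    by (rule foo_pref[OF prx]) (use Sx in blast)
  ultimately show ?thesis using \<pi>'(1) by metis
qed


lemma dir2fin:
  assumes pS: "p \<in> S"
    and mp: "maximal_path (AE E S) (FinP ys)" and st: "start (FinP ys) = p"
  shows "\<exists>\<pi>. maximal_path E \<pi> \<and> start \<pi> = p \<and> first_occ_order S \<pi> = first_occ_order S (FinP ys)"
proof -
  have py: "is_path (AE E S) (FinP ys)" and noext: "\<And>y. (last ys, y) \<notin> AE E S" using mp by auto
  have yne: "ys \<noteq> []" using py by auto
  have hy: "hd ys = p" using st by simp
  have "node_at (FinP ys) (length ys - 1) \<in> S"
    by (rule nodes_in[OF py]) (use st pS yne in auto)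
  then have ly: "last ys \<in> S" using yne by (simp add: last_conv_nth)
  obtain xs where xs: "is_path E (FinP xs)" "hd xs = hd ys" "last xs = last ys" "filter (\<lambda>x. x \<in> S) xs = ys"
    using expand_path[OF py ly] by blast
  have xne: "xs \<noteq> []" using xs by auto
  obtain \<pi> where \<pi>: "maximal_path E \<pi>" "pref xs \<pi>" using extend_path[OF xs(1)] by blast
  have pp: "is_path E \<pi>" by (rule max_is_path[OF \<pi>(1)])
  have "valid_pos \<pi> 0 \<and> node_at \<pi> 0 = xs ! 0" using \<pi>(2) xne by (simp add: pref_def)
  then have stp: "start \<pi> = p" using start_node[of \<pi>] xs(2) hy xne by (simp add: hd_conv_nth)
  have cov: "S \<inter> path_nodes \<pi> \<subseteq> set xs"
  proof
    fix z assume z: "z \<in> S \<inter> path_nodes \<pi>"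
    then obtain j where j: "valid_pos \<pi> j" "node_at \<pi> j = z" by (auto simp: path_nodes_def)
    show "z \<in> set xs"
    proof (cases "j < length xs")
      case True
      then have "node_at \<pi> j = xs ! j" using \<pi>(2) by (simp add: pref_def)
      then show ?thesis using True j by simp
    next
      case False
      define Q where "Q = (\<lambda>k. length xs \<le> k \<and> valid_pos \<pi> k \<and> node_at \<pi> k \<in> S)"
      have Qj: "Q j" using False j z by (simp add: Q_def)
      define j0 where "j0 = Least Q"
      have Q0: "Q j0" unfolding j0_def using Qj by (rule LeastI)
      have notQ: "\<not> Q k" if "k < j0" for k using not_less_Least[of k Q] that by (simp add: j0_def)
      define n0 where "n0 = length xs - 1"
      have n0j: "n0 < j0" using Q0 xne unfolding Q_def n0_def by (cases xs) auto
      define seg where "seg = map (node_at \<pi>) [n0..<Suc j0]"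
      have pseg: "is_path E (FinP seg)" unfolding seg_def
        by (rule segment_path[OF pp]) (use Q0 n0j in \<open>auto simp: Q_def\<close>)
      have lseg: "length seg = Suc j0 - n0" using n0j by (simp add: seg_def del: upt_Suc)
      have segi: "seg ! i = node_at \<pi> (n0 + i)" if "i < length seg" for i
        using that by (simp add: seg_def del: upt_Suc)
      have sne: "seg \<noteq> []" using lseg n0j by auto
      have "hd seg = node_at \<pi> n0" using segi[of 0] lseg n0j by (simp add: hd_conv_nth[OF sne])
      also have "\<dots> = xs ! n0" using \<pi>(2) xne by (simp add: pref_def n0_def)
      also have "\<dots> = last ys" using xne xs(3) by (simp add: n0_def last_conv_nth)
      finally have hseg: "hd seg = last ys" .
      have lastseg: "last seg = node_at \<pi> j0"
        using segi[of "length seg - 1"] lseg n0j by (simp add: last_conv_nth[OF sne])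
      have inner: "seg ! i \<notin> S" if "0 < i" "i < length seg - 1" for i
      proof -
        have lx: "length xs > 0" using xne by simp
        have "n0 + i < j0" using that lseg n0j lx unfolding n0_def by linarith
        moreover have "length xs \<le> n0 + i" using that lx unfolding n0_def by linarith
        moreover have "valid_pos \<pi> (n0 + i)" using Q0 \<open>n0 + i < j0\<close> valid_mono[of \<pi> j0] by (simp add: Q_def)
        ultimately have "node_at \<pi> (n0 + i) \<notin> S" using notQ[of "n0 + i"] by (simp add: Q_def)
        then show ?thesis using segi[of i] that by simp
      qed
      have "is_interval E S (last ys) (node_at \<pi> j0) seg"
        unfolding is_interval_def using pseg lseg n0j hseg lastseg ly Q0 inner
        by (auto simp: Q_def)
      then have "(last ys, node_at \<pi> j0) \<in> AE E S" by (auto simp: AE_def)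
      then show ?thesis using noext by blast
    qed
  qed
  have "first_occ_order S \<pi> = first_occ_order S (FinP xs)" by (rule foo_pref[OF \<pi>(2) cov])
  also have "\<dots> = first_occ_order S (FinP ys)" using foo_filter[of S xs] xs(4) by simp
  finally show ?thesis using \<pi>(1) stp by blast
qed


lemma butlast_map_upt: "a \<le> b \<Longrightarrow> butlast (map f [a..<Suc b]) = map f [a..<b]"
  by (simp add: map_butlast[symmetric])

lemma dir2inf:
  assumes pS: "p \<in> S" and fin: "finite S"
    and mp: "maximal_path (AE E S) (InfP f)" and st: "start (InfP f) = p"
  shows "\<exists>\<pi>. maximal_path E \<pi> \<and> start \<pi> = p \<and> first_occ_order S \<pi> = first_occ_order S (InfP f)"
proof -
  have pf: "is_path (AE E S) (InfP f)" using mp by simp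
  have f0: "f 0 = p" using st by simp
  have fS: "f n \<in> S" for n using nodes_in[OF pf, of n] st pS by simp
  have rS: "range f \<subseteq> S" using fS by auto
  have finr: "finite (range f)" using rS fin finite_subset by blast
  have pnf: "path_nodes (InfP f) = range f" by (auto simp: path_nodes_def)
  obtain N where N: "N > 0" "range f \<subseteq> f ` {..<N}"
    using cover[OF finr, of "InfP f"] pnf by auto
  have "\<not> inj_on f {N..}"
  proof
    assume "inj_on f {N..}"
    moreover have "finite (f ` {N..})" using finr by (rule finite_subset[rotated]) auto
    ultimately have "finite {N..}" using finite_imageD by blast
    then show False using infinite_Ici by blast
  qed
  then obtain i j where ij: "N \<le> i" "i < j" "f i = f j"
    unfolding inj_on_def by (metis atLeast_iff linorder_neqE_nat)
  define ys where "ys = map f [0..<Suc j]"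
  define cy where "cy = map f [i..<Suc j]"
  have pys: "is_path (AE E S) (FinP ys)" unfolding ys_def
    using segment_path[OF pf, of j 0] by (simp add: node_at_InfP)
  have pcy: "is_path (AE E S) (FinP cy)" unfolding cy_def
    using segment_path[OF pf, of j i] ij by (simp add: node_at_InfP)
  have hys: "hd ys = p" "last ys = f j" using f0 by (simp add: ys_def hd_map del: upt_Suc) (simp add: ys_def)
  have hcy: "hd cy = f i" "last cy = f j" using ij by (simp add: cy_def hd_map del: upt_Suc) (use ij in \<open>simp add: cy_def\<close>)
  have lyS: "last ys \<in> S" and lcS: "last cy \<in> S" using hys hcy fS by simp_all
  obtain xs1 where x1: "is_path E (FinP xs1)" "hd xs1 = hd ys" "last xs1 = last ys" "filter (\<lambda>x. x \<in> S) xs1 = ys"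
    using expand_path[OF pys lyS] by blast
  obtain xs2 where x2: "is_path E (FinP xs2)" "hd xs2 = hd cy" "last xs2 = last cy" "filter (\<lambda>x. x \<in> S) xs2 = cy"
    using expand_path[OF pcy lcS] by blast
  have x1ne: "xs1 \<noteq> []" and x2ne: "xs2 \<noteq> []" using x1 x2 by auto
  define a where "a = butlast xs1"
  define c where "c = butlast xs2"
  have "length cy \<le> length xs2" using x2(4) length_filter_le by metis
  moreover have "length cy = Suc j - i" using ij by (simp add: cy_def del: upt_Suc)
  ultimately have "length xs2 \<ge> 2" using ij by linarith
  then have "length c \<ge> 1" by (simp add: c_def)
  then have cne: "c \<noteq> []" by auto
  have x2e: "xs2 = c @ [last xs2]" using x2ne by (simp add: c_def)
  have hc: "hd c = f i" using x2e cne x2(2) hcy by (metis hd_append2)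
  have cc: "c @ [hd c] = xs2" using x2e hc x2(3) hcy ij by simp
  have s1: "successively (\<lambda>a b. (a,b)\<in>E) xs1" and s2: "successively (\<lambda>a b. (a,b)\<in>E) xs2"
    using x1(1) x2(1) by (simp_all add: isp_list)
  have gl: "successively (\<lambda>a b. (a,b)\<in>E) (a @ xs2) \<and> hd (a @ xs2) = hd xs1"
    unfolding a_def by (rule glue[OF s1 s2 x1ne x2ne]) (simp add: x1(3) x2(2) hys hcy ij)
  have "successively (\<lambda>a b. (a,b)\<in>E) ((a @ c) @ [last xs2])" using gl x2e by (metis append_assoc)
  then have "successively (\<lambda>a b. (a,b)\<in>E) (a @ c)" by (simp only: successively_append_iff)
  then have pac: "is_path E (FinP (a @ c))" using cne by (simp add: isp_list)
  have pc: "is_path E (FinP (c @ [hd c]))" using cc x2(1) by simp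
  define g where "g = (\<lambda>n. if n < length a then a ! n else c ! ((n - length a) mod length c))"
  have L: "is_path E (InfP g) \<and> pref (a @ c) (InfP g) \<and> path_nodes (InfP g) \<subseteq> set (a @ c)"
    unfolding g_def by (rule lasso[OF cne pac pc])
  have "g 0 = (a @ c) ! 0" using L cne by (simp add: pref_def)
  also have "\<dots> = hd (a @ c)" using cne by (simp add: hd_conv_nth)
  also have "\<dots> = hd (a @ xs2)" using x2e cne by (metis append_assoc hd_append2 append_is_Nil_conv)
  also have "\<dots> = p" using gl x1(2) hys by simp
  finally have g0: "g 0 = p" .
  have "first_occ_order S (InfP g) = first_occ_order S (FinP (a @ c))"
    by (rule foo_pref) (use L in auto)
  also have "\<dots> = first_occ_order S (FinP (filter (\<lambda>x. x \<in> S) (a @ c)))"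
    by (rule foo_filter[symmetric])
  also have "filter (\<lambda>x. x \<in> S) (a @ c) = map f [0..<j] @ map f [i..<j]"
  proof -
    have "filter (\<lambda>x. x \<in> S) a = butlast ys" unfolding a_def
      using filter_butlast[OF x1ne, of "\<lambda>x. x \<in> S"] x1(3,4) hys fS by simp
    moreover have "filter (\<lambda>x. x \<in> S) c = butlast cy" unfolding c_def
      using filter_butlast[OF x2ne, of "\<lambda>x. x \<in> S"] x2(3,4) hcy fS by simp
    ultimately show ?thesis using ij by (simp add: ys_def cy_def butlast_map_upt del: upt_Suc)
  qed
  also have "first_occ_order S (FinP (map f [0..<j] @ map f [i..<j])) = first_occ_order S (FinP (map f [0..<j]))"
    by (rule foo_pref) (auto simp: pref_def nth_append)
  also have "\<dots> = first_occ_order S (InfP f)"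
  proof (rule foo_pref[symmetric])
    show "pref (map f [0..<j]) (InfP f)" by (simp add: pref_def)
    show "S \<inter> path_nodes (InfP f) \<subseteq> set (map f [0..<j])"
      using N(2) ij unfolding pnf by force
  qed
  finally show ?thesis using L g0 by (intro exI[of _ "InfP g"]) simp
qed


theorem lemma4p4:
  fixes V :: "'a set" and E :: "('a \<times> 'a) set" and p :: 'a
  assumes "cfg V E" and "p \<in> V" and "predicate_node E p"
  shows "(\<forall>\<pi>. maximal_path E \<pi> \<and> start \<pi> = p \<longrightarrow>
            (\<exists>\<pi>'. maximal_path (Ap_edges V E p) \<pi>' \<and> start \<pi>' = p \<and>
                  first_occ_order (Vp V E p) \<pi>' = first_occ_order (Vp V E p) \<pi>))
       \<and> (\<forall>\<pi>'. maximal_path (Ap_edges V E p) \<pi>' \<and> start \<pi>' = p \<longrightarrow>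
            (\<exists>\<pi>. maximal_path E \<pi> \<and> start \<pi> = p \<and>
                  first_occ_order (Vp V E p) \<pi> = first_occ_order (Vp V E p) \<pi>'))"
proof -
  have fin: "finite (Vp V E p)"
  proof (rule finite_subset)
    show "Vp V E p \<subseteq> V" by (auto simp: Vp_def)
    show "finite V" using assms(1) by (simp add: cfg_def)
  qed
  have pS: "p \<in> Vp V E p" by (rule p_in_Vp[OF assms(2)])
  show ?thesis unfolding Ap_AE
  proof (intro conjI allI impI)
    fix \<pi> assume "maximal_path E \<pi> \<and> start \<pi> = p"
    then show "\<exists>\<pi>'. maximal_path (AE E (Vp V E p)) \<pi>' \<and> start \<pi>' = p \<and>
                  first_occ_order (Vp V E p) \<pi>' = first_occ_order (Vp V E p) \<pi>"
      using dir1[OF fin refl assms(2)] by blast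
  next
    fix \<pi>' assume H: "maximal_path (AE E (Vp V E p)) \<pi>' \<and> start \<pi>' = p"
    show "\<exists>\<pi>. maximal_path E \<pi> \<and> start \<pi> = p \<and>
                  first_occ_order (Vp V E p) \<pi> = first_occ_order (Vp V E p) \<pi>'"
    proof (cases \<pi>')
      case (FinP ys)
      then show ?thesis using dir2fin[OF pS] H by blast
    next
      case (InfP f)
      then show ?thesis using dir2inf[OF pS fin] H by blast
    qed
  qed
qed

end
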